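(* Let $n\geq 3$, $2\leq p<n$, $-\infty<\alpha<\frac{n-p}{p}$, let $b\in\mathbb{R}$ and set $\delta_1=n-p-\alpha p-\frac{n+pb}{p}$, $\delta_2=n-p-\alpha p-\frac{bp}{p-1}$. Let $|x|$ be the Euclidean norm and $\nabla$ the standard gradient on $\mathbb{R}^n$. Then for every $f\in C_0^\infty(\mathbb{R}^n\setminus\{0\})$, $$\int_{\mathbb{R}^n}\frac{|\nabla f(x)|^p}{|x|^{\alpha p}}dx-\left(\frac{n-p-\alpha p}{p}\right)^p\int_{\mathbb{R}^n}\frac{|f(x)|^p}{|x|^{(\alpha+1)p}}dx\geq C_p\frac{\left(\int_{\mathbb{R}^n}|f(x)|^p|x|^{\delta_1}dx\right)^p}{\left(\int_{\mathbb{R}^n}|f(x)|^p|x|^{\delta_2}dx\right)^{p-1}},$$ where $C_p=c_p\left|\frac{n(p-1)-pb}{p^2}\right|^p$ and $c_p=\min_{0<t\leq 1/2}\left((1-t)^p-t^p+pt^{p-1}\right)$. *)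

theory Defs
  imports "HOL-Analysis.Analysis"
begin

definition partial_deriv :: "'n::finite \<Rightarrow> (real^'n \<Rightarrow> real) \<Rightarrow> real^'n \<Rightarrow> real" where
  "partial_deriv i f x = deriv (\<lambda>t. f (x + t *\<^sub>R axis i 1)) 0"

fun iter_partial :: "'n::finite list \<Rightarrow> (real^'n \<Rightarrow> real) \<Rightarrow> real^'n \<Rightarrow> real" where
  "iter_partial [] f = f"
| "iter_partial (i # is) f = partial_deriv i (iter_partial is f)"

definition smooth_fun :: "(real^'n::finite \<Rightarrow> real) \<Rightarrow> bool" where
  "smooth_fun f \<longleftrightarrow>
     (\<forall>is. continuous_on UNIV (iter_partial is f)) \<and>
     (\<forall>is i x. (\<lambda>t. iter_partial is f (x + t *\<^sub>R axis i 1)) differentiable (at 0))"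

definition C0_inf_punctured :: "(real^'n::finite \<Rightarrow> real) \<Rightarrow> bool" where
  "C0_inf_punctured f \<longleftrightarrow> smooth_fun f \<and>
     compact (closure {x. f x \<noteq> 0}) \<and> 0 \<notin> closure {x. f x \<noteq> 0}"

definition grad :: "(real^'n::finite \<Rightarrow> real) \<Rightarrow> real^'n \<Rightarrow> real^'n" where
  "grad f x = (\<chi> i. partial_deriv i f x)"

definition c_const :: "real \<Rightarrow> real" where
  "c_const p = Inf ((\<lambda>t. (1 - t) powr p - t powr p + p * t powr (p - 1)) ` {0<..1/2})"

end

theory Submission
  imports Defs
begin

lemma abs_powr_deriv:
  fixes p x :: real assumes p: "1 < p"
  shows "((\<lambda>x. \<bar>x\<bar> powr p) has_real_derivative (p * \<bar>x\<bar> powr (p-1) * sgn x)) (at x)"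
proof (cases "x = 0")
  case True
  have "((\<lambda>y. \<bar>y\<bar> powr (p - 1)) \<longlongrightarrow> 0) (at 0)"
    by (rule tendsto_zero_powrI[where b="p-1"]) (auto intro!: tendsto_eq_intros simp: p)
  then have "((\<lambda>y. \<bar>\<bar>y\<bar> powr p / y\<bar>) \<longlongrightarrow> 0) (at 0)"
  proof (rule Lim_transform_eventually)
    show "\<forall>\<^sub>F y in at 0. \<bar>y\<bar> powr (p - 1) = \<bar>\<bar>y\<bar> powr p / y\<bar>"
      by (auto simp: eventually_at_filter powr_diff abs_divide)
  qed
  then have "((\<lambda>y. \<bar>y\<bar> powr p / y) \<longlongrightarrow> 0) (at 0)"
    by (rule tendsto_rabs_zero_cancel)
  then show ?thesis using True
    by (simp add: has_field_derivative_iff)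
next
  case False
  then consider "x > 0" | "x < 0" by linarith
  then show ?thesis
  proof cases
    case 1
    have ev: "\<forall>\<^sub>F y in nhds x. \<bar>y\<bar> powr p = y powr p"
      using eventually_nhds_in_open[of "{0<..}" x] 1 by (auto elim!: eventually_mono)
    show ?thesis
      apply (subst DERIV_cong_ev[OF refl ev refl])
      using has_real_derivative_powr[OF 1, of p] 1 by simp
  next
    case 2
    have ev: "\<forall>\<^sub>F y in nhds x. \<bar>y\<bar> powr p = (-y) powr p"
      using eventually_nhds_in_open[of "{..<0}" x] 2 by (auto elim!: eventually_mono)
    have "DERIV (\<lambda>y. (-y) powr p) x :> p * (-x) powr (p - of_nat 1) * (-1)"
      by (rule DERIV_fun_powr) (auto intro!: derivative_eq_intros simp: 2)
    then show ?thesis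
      apply (subst DERIV_cong_ev[OF refl ev refl])
      using 2 by simp
  qed
qed

lemma mvt_open:
  fixes f f' :: "real \<Rightarrow> real"
  assumes "a < b" "continuous_on {a..b} f" "\<And>x. a < x \<Longrightarrow> x < b \<Longrightarrow> (f has_real_derivative f' x) (at x)"
  shows "\<exists>z. a < z \<and> z < b \<and> f b - f a = (b - a) * f' z"
proof -
  from MVT[OF assms(1,2)] assms(3) obtain l z where "a < z" "z < b" "DERIV f z :> l" "f b - f a = (b - a) * l"
    by (meson real_differentiable_def)
  moreover have "l = f' z" using DERIV_unique calculation assms(3) by blast
  ultimately show ?thesis by blast
qed

lemma powr_diff_bounds:
  fixes a b q :: real
  assumes "0 \<le> a" "a < b" "1 \<le> q"
  shows "q * a powr (q-1) * (b-a) \<le> b powr q - a powr q"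
    and "b powr q - a powr q \<le> q * b powr (q-1) * (b-a)"
proof -
  have c: "continuous_on {a..b} (\<lambda>x. x powr q)"
    using assms by (intro continuous_on_powr') (auto intro: continuous_intros)
  have dd: "\<And>x. a < x \<Longrightarrow> x < b \<Longrightarrow> ((\<lambda>x. x powr q) has_real_derivative q * x powr (q-1)) (at x)"
    using assms by (intro has_real_derivative_powr) auto
  obtain z where z: "a < z" "z < b" "b powr q - a powr q = (b - a) * (q * z powr (q - 1))"
    using mvt_open[OF assms(2) c dd] by blast
  have m: "a powr (q-1) \<le> z powr (q-1)" "z powr (q-1) \<le> b powr (q-1)"
    using z assms by (auto intro!: powr_mono2)
  have bq: "0 \<le> (b - a) * q" using assms by simp
  have "(b - a) * q * a powr (q-1) \<le> (b - a) * q * z powr (q-1)"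
    using mult_left_mono[OF m(1) bq] .
  then show "q * a powr (q-1) * (b-a) \<le> b powr q - a powr q"
    using z(3) by (simp add: algebra_simps)
  have "(b - a) * q * z powr (q-1) \<le> (b - a) * q * b powr (q-1)"
    using mult_left_mono[OF m(2) bq] .
  then show "b powr q - a powr q \<le> q * b powr (q-1) * (b-a)"
    using z(3) by (simp add: algebra_simps)
qed

definition Gp :: "real \<Rightarrow> real \<Rightarrow> real" where
  "Gp p t = \<bar>t - 1\<bar> powr p - \<bar>t\<bar> powr p + p * \<bar>t\<bar> powr (p-1) * sgn t"

lemma Gp_small: "0 < t \<Longrightarrow> t \<le> 1/2 \<Longrightarrow> Gp p t = (1 - t) powr p - t powr p + p * t powr (p - 1)"
  by (simp add: Gp_def abs_if)

lemma Gp_small_nonneg: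
  assumes "2 \<le> p" "0 < t" "t \<le> 1/2" shows "0 \<le> Gp p t"
proof -
  have "t powr p \<le> (1 - t) powr p" using assms by (intro powr_mono2) auto
  moreover have "0 \<le> p * t powr (p - 1)" using assms by auto
  ultimately show ?thesis using assms by (simp add: Gp_small)
qed

lemma c_const_alt: "c_const p = Inf (Gp p ` {0<..1/2})"
  unfolding c_const_def by (intro arg_cong[where f=Inf] image_cong) (auto simp: Gp_small)

lemma c_const_le:
  assumes "2 \<le> p" "0 < t" "t \<le> 1/2" shows "c_const p \<le> Gp p t"
  unfolding c_const_alt using assms Gp_small_nonneg[OF assms(1)]
  by (intro cInf_lower) (auto intro!: bdd_belowI[where m=0])

lemma c_const_nonneg:
  assumes "2 \<le> p" shows "0 \<le> c_const p"
  unfolding c_const_alt using assms Gp_small_nonneg[OF assms(1)]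
  by (intro cInf_greatest) auto

lemma ln2_ge: "1 \<le> 2 * ln (2::real)"
proof -
  have "exp 1 \<le> (4::real)" using exp_le by simp
  then have "ln (exp 1) \<le> ln (4::real)" by (subst ln_le_cancel_iff) auto
  also have "ln (4::real) = 2 * ln 2" using ln_realpow[of 2 2] by simp
  finally show ?thesis by simp
qed

lemma c_const_le1:
  assumes "2 \<le> p" shows "c_const p \<le> 1"
proof -
  have "c_const p \<le> Gp p (1/2)" using c_const_le[OF assms] by simp
  also have "Gp p (1/2) = p * (1/2) powr (p - 1)"
    by (simp add: Gp_small)
  also have "\<dots> \<le> 1"
  proof -
    have "2 powr (p - 1) = exp (ln 2 + (p - 2) * ln 2)"
      by (simp add: powr_def algebra_simps)
    also have "\<dots> = 2 * exp ((p - 2) * ln 2)" by (simp add: exp_add)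
    finally have e2: "2 powr (p - 1) = 2 * exp ((p - 2) * ln 2)" .
    have "exp ((p - 2) * ln 2) \<ge> 1 + (p - 2) * ln 2" by (rule exp_ge_add_one_self)
    then have A: "2 * exp ((p - 2) * ln 2) \<ge> 2 + 2 * ((p-2) * ln 2)" by linarith
    have "(p-2) * 1 \<le> (p - 2) * (2 * ln 2)"
      using assms ln2_ge by (intro mult_left_mono) auto
    then have "p - 2 \<le> (p - 2) * (2 * ln 2)" by simp
    moreover have "(p - 2) * (2 * ln 2) = 2 * ((p-2) * ln 2)" by (simp add: algebra_simps)
    ultimately have "(p-2) \<le> 2 * ((p-2) * ln 2)" by metis
    then have "p \<le> 2 powr (p - 1)" using A e2 by linarith
    then have "p * (1/2) powr (p - 1) \<le> 2 powr (p - 1) * (1/2) powr (p - 1)"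
      by (rule mult_right_mono) simp
    also have "\<dots> = 1" by (simp add: powr_mult[symmetric])
    finally show ?thesis .
  qed
  finally show ?thesis .
qed

lemma phi_ge:
  fixes p u :: real
  assumes p: "2 \<le> p" and u: "0 \<le> u"
  shows "1 + u powr p + p * u powr (p-1) \<le> (1+u) powr p"
proof (cases "u = 0")
  case True then show ?thesis by auto
next
  case False
  with u have u0: "0 < u" by simp
  define \<phi> where "\<phi> x = (1+x) powr p - x powr p - p * x powr (p-1)" for x :: real
  have c: "continuous_on {0..u} \<phi>"
    unfolding \<phi>_def using p by (intro continuous_intros continuous_on_powr') auto
  have d: "(\<phi> has_real_derivative (p * (1+x) powr (p-1) - p * x powr (p-1) - p * ((p-1) * x powr (p-1-1)))) (at x)"
    if "0 < x" for x
  proof -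
    have d1: "((\<lambda>x. (1+x) powr p) has_real_derivative p * (1+x) powr (p-1)) (at x)"
      using DERIV_fun_powr[of "\<lambda>x. 1+x" x 1 p] that by (auto intro!: derivative_eq_intros)
    have d2: "((\<lambda>x. x powr p) has_real_derivative p * x powr (p-1)) (at x)"
      using has_real_derivative_powr that by blast
    have d3: "((\<lambda>x. x powr (p-1)) has_real_derivative (p-1) * x powr (p-1-1)) (at x)"
      using has_real_derivative_powr that by blast
    show ?thesis unfolding \<phi>_def
      by (intro DERIV_diff d1 d2 DERIV_cmult d3)
  qed
  obtain z where z: "0 < z" "z < u"
    "\<phi> u - \<phi> 0 = (u - 0) * (p * (1+z) powr (p-1) - p * z powr (p-1) - p * ((p-1) * z powr (p-1-1)))"
    using mvt_open[OF u0 c, of "\<lambda>x. p * (1+x) powr (p-1) - p * x powr (p-1) - p * ((p-1) * x powr (p-1-1))"] d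
    by auto
  have "(p-1) * z powr (p-1-1) * ((1+z) - z) \<le> (1+z) powr (p-1) - z powr (p-1)"
    using powr_diff_bounds(1)[of z "1+z" "p-1"] z p by auto
  then have "(p-1) * z powr (p-1-1) \<le> (1+z) powr (p-1) - z powr (p-1)" by simp
  then have "p * ((p-1) * z powr (p-1-1)) \<le> p * ((1+z) powr (p-1) - z powr (p-1))"
    using p by (intro mult_left_mono) auto
  then have "0 \<le> p * (1+z) powr (p-1) - p * z powr (p-1) - p * ((p-1) * z powr (p-1-1))"
    by (simp add: right_diff_distrib)
  then have "0 \<le> \<phi> u - \<phi> 0" using z u0 by simp
  then show ?thesis by (simp add: \<phi>_def)
qed

lemma H_deriv:
  assumes p: "2 \<le> p" and x: "0 < x"
  shows "((\<lambda>x. \<bar>x - 1\<bar> powr p - x powr p + p * x powr (p-1)) has_real_derivative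
     (p * \<bar>x-1\<bar> powr (p-1) * sgn (x-1) - p * x powr (p-1) + p * ((p-1) * x powr (p-1-1)))) (at x)"
proof -
  have d1: "((\<lambda>x. \<bar>x - 1\<bar> powr p) has_real_derivative p * \<bar>x-1\<bar> powr (p-1) * sgn (x-1) * 1) (at x)"
    using p by (intro DERIV_chain2[OF abs_powr_deriv]) (auto intro!: derivative_eq_intros)
  have d2: "((\<lambda>x. x powr p) has_real_derivative p * x powr (p-1)) (at x)"
    using has_real_derivative_powr x by blast
  have d3: "((\<lambda>x. x powr (p-1)) has_real_derivative (p-1) * x powr (p-1-1)) (at x)"
    using has_real_derivative_powr x by blast
  show ?thesis using d1 by (intro DERIV_add DERIV_diff d2 DERIV_cmult d3) auto
qed

lemma Gp_ge_half:
  assumes p: "2 \<le> p" and t: "1/2 < t"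
  shows "Gp p (1/2) \<le> Gp p t"
proof -
  define H where "H x = \<bar>x - 1\<bar> powr p - x powr p + p * x powr (p-1)" for x :: real
  define H' where "H' x = p * \<bar>x-1\<bar> powr (p-1) * sgn (x-1) - p * x powr (p-1) + p * ((p-1) * x powr (p-1-1))" for x :: real
  have GH: "Gp p x = H x" if "0 < x" for x using that by (simp add: Gp_def H_def)
  have d: "(H has_real_derivative H' x) (at x)" if "0 < x" for x
    unfolding H_def H'_def using H_deriv[OF p that] .
  have c: "continuous_on {1/2..t} H"
    by (rule continuous_at_imp_continuous_on) (auto intro: DERIV_isCont[OF d])
  obtain z where z: "1/2 < z" "z < t" "H t - H (1/2) = (t - 1/2) * H' z"
    using mvt_open[OF t c, of H'] d by auto
  have "0 \<le> H' z"
  proof (cases "1 \<le> z")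
    case True
    have e: "\<bar>z-1\<bar> powr (p-1) * sgn (z-1) = (z-1) powr (p-1)"
      using True by (cases "z = 1") auto
    have "z powr (p-1) - (z-1) powr (p-1) \<le> (p-1) * z powr (p-1-1) * (z - (z-1))"
      using powr_diff_bounds(2)[of "z-1" z "p-1"] True p by auto
    then have "0 \<le> (z-1) powr (p-1) - z powr (p-1) + (p-1) * z powr (p-1-1)" by simp
    then have "0 \<le> p * ((z-1) powr (p-1) - z powr (p-1) + (p-1) * z powr (p-1-1))"
      using p by simp
    then show ?thesis unfolding H'_def using e by (simp add: algebra_simps mult.assoc)
  next
    case False
    have e: "\<bar>z-1\<bar> powr (p-1) * sgn (z-1) = - ((1-z) powr (p-1))"
      using False by (simp add: abs_if)
    have z0: "0 < z" "0 < 1 - z" "1 - z \<le> z" using z False by auto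
    have "(1-z) powr (p-1) = (1-z) * (1-z) powr (p-2)"
      using z0 powr_add[of "1-z" 1 "p-2"] by simp
    also have "\<dots> \<le> (1-z) * z powr (p-2)"
      using z0 p by (intro mult_left_mono powr_mono2) auto
    finally have A: "(1-z) powr (p-1) \<le> (1-z) * z powr (p-2)" .
    have B: "z powr (p-1) = z * z powr (p-2)"
      using z0 powr_add[of z 1 "p-2"] by simp
    have C: "z powr (p-2) \<le> (p-1) * z powr (p-2)"
      using p z0 by (simp add: mult_le_cancel_right1)
    have "0 \<le> (p-1) * z powr (p-1-1) - (1-z) powr (p-1) - z powr (p-1)"
      using A B C by (simp add: algebra_simps)
    then have "0 \<le> p * ((p-1) * z powr (p-1-1) - (1-z) powr (p-1) - z powr (p-1))"
      using p by simp
    then show ?thesis unfolding H'_def using e by (simp add: algebra_simps mult.assoc)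
  qed
  then have "0 \<le> (t - 1/2) * H' z" using z by simp
  then have "H (1/2) \<le> H t" using z by linarith
  then show ?thesis using GH[of "1/2"] GH[of t] t by simp
qed

lemma G_ge:
  assumes p: "2 \<le> p" shows "c_const p \<le> Gp p t"
proof -
  consider "t \<le> 0" | "0 < t" "t \<le> 1/2" | "1/2 < t" by linarith
  then show ?thesis
  proof cases
    case 1
    define u where "u = -t"
    have u: "0 \<le> u" using 1 by (simp add: u_def)
    have "Gp p t = (1 + u) powr p - u powr p - p * u powr (p-1)"
      using 1 p by (cases "t = 0") (auto simp: Gp_def u_def abs_if)
    then have "1 \<le> Gp p t" using phi_ge[OF p u] by simp
    then show ?thesis using c_const_le1[OF p] by simp
  next
    case 2 then show ?thesis using c_const_le[OF p] by simp
  next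
    case 3 then show ?thesis using c_const_le[OF p, of "1/2"] Gp_ge_half[OF p 3] by simp
  qed
qed

lemma scalar_ineq:
  fixes a b p :: real
  assumes p: "2 \<le> p"
  shows "\<bar>b\<bar> powr p + p * (\<bar>b\<bar> powr (p-1) * sgn b) * (a - b) + c_const p * \<bar>a - b\<bar> powr p \<le> \<bar>a\<bar> powr p"
proof (cases "a = b")
  case True then show ?thesis by simp
next
  case False
  define d where "d = b - a"
  define t where "t = b / d"
  have d0: "d \<noteq> 0" using False by (simp add: d_def)
  have bd: "b = d * t" and ad: "a = d * (t - 1)" using d0 by (auto simp: t_def d_def field_simps)
  have D: "\<bar>d\<bar> powr (p-1) * sgn d * d = \<bar>d\<bar> powr p"
  proof -
    have "sgn d * d = \<bar>d\<bar>" by (simp add: sgn_mult_self_eq abs_if sgn_if)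
    then have "\<bar>d\<bar> powr (p-1) * sgn d * d = \<bar>d\<bar> powr (p-1) * \<bar>d\<bar> powr 1" using d0 by (simp add: mult.assoc)
    also have "\<dots> = \<bar>d\<bar> powr p" using d0 powr_add[of "\<bar>d\<bar>" "p-1" 1] by simp
    finally show ?thesis .
  qed
  have e1: "\<bar>a\<bar> powr p = \<bar>d\<bar> powr p * \<bar>t - 1\<bar> powr p" by (simp add: ad abs_mult powr_mult)
  have e2: "\<bar>b\<bar> powr p = \<bar>d\<bar> powr p * \<bar>t\<bar> powr p" by (simp add: bd abs_mult powr_mult)
  have e3: "p * (\<bar>b\<bar> powr (p-1) * sgn b) * (a - b) = - (\<bar>d\<bar> powr p * (p * \<bar>t\<bar> powr (p-1) * sgn t))"
  proof -
    have "a - b = - d" by (simp add: d_def)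
    then have "p * (\<bar>b\<bar> powr (p-1) * sgn b) * (a - b) = p * (\<bar>d*t\<bar> powr (p-1) * sgn (d*t)) * (-d)"
      using bd by simp
    also have "\<dots> = - (p * \<bar>t\<bar> powr (p-1) * sgn t) * (\<bar>d\<bar> powr (p-1) * sgn d * d)"
      by (simp add: abs_mult powr_mult sgn_mult algebra_simps)
    finally have "p * (\<bar>b\<bar> powr (p-1) * sgn b) * (a - b)
        = - (p * \<bar>t\<bar> powr (p-1) * sgn t) * (\<bar>d\<bar> powr (p-1) * sgn d * d)" .
    then show ?thesis using D by simp
  qed
  have e4: "\<bar>a - b\<bar> powr p = \<bar>d\<bar> powr p" by (simp add: d_def abs_minus_commute)
  have "c_const p * \<bar>d\<bar> powr p \<le> Gp p t * \<bar>d\<bar> powr p"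
    using G_ge[OF p] by (intro mult_right_mono) auto
  then show ?thesis unfolding e1 e2 e3 e4 Gp_def by (simp add: algebra_simps)
qed

lemma translate_integral:
  fixes h :: "real^'n::finite \<Rightarrow> real"
  assumes hm: "h \<in> borel_measurable borel"
  shows "(\<integral>x. h (c + x) \<partial>lborel) = (\<integral>x. h x \<partial>lborel)"
    and "integrable lborel h \<Longrightarrow> integrable lborel (\<lambda>x. h (c + x))"
proof -
  have m: "((+) c) \<in> measurable lborel borel" by simp
  have "(\<integral>x. h (c + x) \<partial>lborel) = integral\<^sup>L (distr lborel borel ((+) c)) h"
    by (rule integral_distr[OF m hm, symmetric])
  then show "(\<integral>x. h (c + x) \<partial>lborel) = (\<integral>x. h x \<partial>lborel)"
    by (simp add: lborel_distr_plus)
  assume "integrable lborel h"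
  then have "integrable (distr lborel borel ((+) c)) h" by (simp add: lborel_distr_plus)
  then show "integrable lborel (\<lambda>x. h (c + x))"
    using integrable_distr_eq[OF m hm] by simp
qed

lemma int_bounded_support:
  fixes g :: "real^'n::finite \<Rightarrow> real"
  assumes gm: "g \<in> borel_measurable borel" and K: "compact K"
    and out: "\<And>x. x \<notin> K \<Longrightarrow> g x = 0" and bd: "\<And>x. x \<in> K \<Longrightarrow> \<bar>g x\<bar> \<le> M"
  shows "integrable lborel g"
proof -
  have "K \<in> sets borel" using K by (simp add: compact_imp_closed borel_closed)
  then have i1: "integrable lborel (\<lambda>x. M * indicator K x)"
    using emeasure_compact_finite[OF K] by (intro integrable_mult_right integrable_real_indicator) auto
  have AE: "AE x in lborel. norm (g x) \<le> norm (M * indicator K x)"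
  proof (rule AE_I2)
    fix x show "norm (g x) \<le> norm (M * indicator K x)"
      using out[of x] bd[of x] by (cases "x \<in> K") auto
  qed
  show ?thesis by (rule Bochner_Integration.integrable_bound[OF i1 _ AE]) (use gm in simp)
qed

lemma ibp_zero:
  fixes h hd :: "real^'n::finite \<Rightarrow> real" and i :: 'n
  assumes hm: "h \<in> borel_measurable borel" and hint: "integrable lborel h"
    and supp: "\<And>x. R < norm x \<Longrightarrow> h x = 0"
    and der: "\<And>x s. ((\<lambda>s. h (x + s *\<^sub>R axis i 1)) has_real_derivative hd (x + s *\<^sub>R axis i 1)) (at s)"
    and bd: "\<And>x. \<bar>hd x\<bar> \<le> M"
  shows "integrable lborel hd" "(\<integral>x. hd x \<partial>lborel) = 0"
proof -
  define e where "e = (\<lambda>k. inverse (real (Suc k)))"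
  define Q where "Q k x = (h (x + e k *\<^sub>R axis i 1) - h x) / e k" for k x
  have e0: "0 < e k" "e k \<le> 1" for k by (auto simp: e_def field_simps)
  have Qm: "Q k \<in> borel_measurable lborel" for k
    unfolding Q_def using hm by measurable
  have lim: "(\<lambda>k. Q k x) \<longlonglongrightarrow> hd x" for x
  proof -
    have "((\<lambda>s. h (x + s *\<^sub>R axis i 1)) has_real_derivative hd x) (at 0)"
      using der[of x 0] by simp
    then have L: "((\<lambda>s. (h (x + s *\<^sub>R axis i 1) - h x) / s) \<longlongrightarrow> hd x) (at 0)"
      by (simp add: has_field_derivative_iff)
    have "e \<longlonglongrightarrow> 0" unfolding e_def by (rule LIMSEQ_inverse_real_of_nat)
    then have "filterlim e (at 0) sequentially"
      unfolding filterlim_at using e0(1) by (auto intro!: always_eventually simp: less_imp_neq[symmetric])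
    from filterlim_compose[OF L this] show ?thesis by (simp add: Q_def o_def)
  qed
  have hdm: "hd \<in> borel_measurable lborel"
    by (rule borel_measurable_LIMSEQ_real[OF lim Qm])
  have "M \<ge> 0" using bd[of 0] by simp
  have Qbd: "norm (Q k x) \<le> M * indicator (cball 0 (R+1)) x" for k x
  proof (cases "x \<in> cball 0 (R+1)")
    case False
    then have nx: "R + 1 < norm x" by simp
    have "norm x \<le> norm (x + e k *\<^sub>R axis i 1) + norm (e k *\<^sub>R axis i 1 :: real^'n)"
      using norm_triangle_ineq[of "x + e k *\<^sub>R axis i 1" "- (e k *\<^sub>R axis i 1)"] using norm_axis_1[of i] by simp
    then have "R < norm (x + e k *\<^sub>R axis i 1)" using nx e0[of k] by simp
    then show ?thesis using False supp[of x] nx by (simp add: Q_def supp)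
  next
    case True
    obtain z where "0 < z" "z < e k"
      "h (x + e k *\<^sub>R axis i 1) - h (x + 0 *\<^sub>R axis i 1) = (e k - 0) * hd (x + z *\<^sub>R axis i 1)"
      using MVT2[OF e0(1)[of k], of "\<lambda>s. h (x + s *\<^sub>R axis i 1)" "\<lambda>s. hd (x + s *\<^sub>R axis i 1)"] der
      by blast
    then have "Q k x = hd (x + z *\<^sub>R axis i 1)" using e0[of k] by (simp add: Q_def)
    then show ?thesis using True bd by simp
  qed
  have wint: "integrable lborel (\<lambda>x. M * indicator (cball (0::real^'n) (R+1)) x :: real)"
    using emeasure_compact_finite[of "cball (0::real^'n) (R + 1)"]
    by (intro integrable_mult_right integrable_real_indicator) auto
  have Q0: "(\<integral>x. Q k x \<partial>lborel) = 0" for k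
  proof -
    have i1: "integrable lborel (\<lambda>x. h (e k *\<^sub>R axis i 1 + x))"
      using translate_integral(2)[OF hm hint] by blast
    have "(\<integral>x. Q k x \<partial>lborel) = ((\<integral>x. h (e k *\<^sub>R axis i 1 + x) \<partial>lborel) - (\<integral>x. h x \<partial>lborel)) / e k"
      unfolding Q_def using i1 hint by (simp add: add.commute)
    also have "\<dots> = 0" using translate_integral(1)[OF hm] by simp
    finally show ?thesis .
  qed
  show "integrable lborel hd"
    by (rule integrable_dominated_convergence[where s=Q, OF hdm _ wint]) (use lim Qbd Qm in auto)
  have "(\<lambda>k. \<integral>x. Q k x \<partial>lborel) \<longlonglongrightarrow> (\<integral>x. hd x \<partial>lborel)"
    by (rule integral_dominated_convergence[where s=Q, OF hdm _ wint]) (use lim Qbd Qm in auto)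
  then show "(\<integral>x. hd x \<partial>lborel) = 0" using Q0 by (simp add: LIMSEQ_const_iff)
qed

definition suppK :: "(real^'n::finite \<Rightarrow> real) \<Rightarrow> (real^'n) set" where
  "suppK f = closure {x. f x \<noteq> 0}"

context
  fixes f :: "real^'n::finite \<Rightarrow> real"
  assumes fC: "C0_inf_punctured f"
begin

lemma f_cont: "continuous_on UNIV f"
  using fC unfolding C0_inf_punctured_def smooth_fun_def
  by (metis iter_partial.simps(1))

lemma pd_cont: "continuous_on UNIV (partial_deriv i f)"
proof -
  have "continuous_on UNIV (iter_partial [i] f)"
    using fC unfolding C0_inf_punctured_def smooth_fun_def by blast
  then show ?thesis by simp
qed

lemma f_line_deriv:
  "((\<lambda>s. f (x + s *\<^sub>R axis i 1)) has_real_derivative partial_deriv i f (x + s *\<^sub>R axis i 1)) (at s)"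
proof -
  define y where "y = x + s *\<^sub>R axis i 1"
  have "(\<lambda>u. iter_partial [] f (y + u *\<^sub>R axis i 1)) differentiable (at 0)"
    using fC unfolding C0_inf_punctured_def smooth_fun_def by blast
  then have "(\<lambda>u. f (y + u *\<^sub>R axis i 1)) differentiable (at 0)" by simp
  then have d0: "((\<lambda>u. f (y + u *\<^sub>R axis i 1)) has_real_derivative partial_deriv i f y) (at 0)"
    unfolding partial_deriv_def using DERIV_deriv_iff_real_differentiable by blast
  have "((\<lambda>u. f (y + u *\<^sub>R axis i 1)) has_real_derivative partial_deriv i f y) (at (s + (-s)))"
    using d0 by simp
  then have "((\<lambda>u. f (y + (u + (-s)) *\<^sub>R axis i 1)) has_real_derivative partial_deriv i f y) (at s)"
    by (subst (asm) DERIV_shift) simp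
  moreover have "(\<lambda>u. f (y + (u + (-s)) *\<^sub>R axis i 1)) = (\<lambda>u. f (x + u *\<^sub>R axis i 1))"
    by (rule ext) (simp add: y_def algebra_simps)
  ultimately show ?thesis by (simp add: y_def)
qed

lemma K_compact: "compact (suppK f)" and K_0: "0 \<notin> suppK f"
  using fC by (auto simp: C0_inf_punctured_def suppK_def)

lemma f_out: "x \<notin> suppK f \<Longrightarrow> f x = 0"
  using closure_subset[of "{x. f x \<noteq> 0}"] by (auto simp: suppK_def)

lemma pd_out:
  assumes x: "x \<notin> suppK f" shows "partial_deriv i f x = 0"
proof -
  define S where "S = (\<lambda>u. x + u *\<^sub>R axis i (1::real)) -` (- suppK f)"
  have "open S" unfolding S_def
    by (rule continuous_open_vimage) (auto intro!: continuous_intros simp: K_compact compact_imp_closed open_Compl)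
  moreover have "0 \<in> S" using x by (simp add: S_def)
  moreover have "\<And>u. u \<in> S \<Longrightarrow> 0 = f (x + u *\<^sub>R axis i 1)"
    using f_out by (auto simp: S_def)
  ultimately have "((\<lambda>u. f (x + u *\<^sub>R axis i 1)) has_real_derivative 0) (at 0)"
    by (intro has_field_derivative_transform_within_open[OF DERIV_const]) auto
  then show ?thesis unfolding partial_deriv_def by (rule DERIV_imp_deriv)
qed

lemma r_exists: "\<exists>r>0. \<forall>x. norm x < r \<longrightarrow> x \<notin> suppK f"
proof -
  have "open (- suppK f)" by (simp add: K_compact compact_imp_closed open_Compl)
  then obtain r where "r > 0" "ball 0 r \<subseteq> - suppK f"
    using K_0 open_contains_ball by blast
  then have "\<forall>x. norm x < r \<longrightarrow> x \<notin> suppK f" by (metis ComplD mem_ball_0 subsetD)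
  then show ?thesis using \<open>r > 0\<close> by blast
qed

lemma R_exists: "\<exists>R>0. \<forall>x\<in>suppK f. norm x \<le> R"
  using compact_imp_bounded[OF K_compact] bounded_pos by blast

end

lemma bounded_outside:
  fixes g :: "real^'n::finite \<Rightarrow> 'b::real_normed_vector"
  assumes "compact K" "continuous_on UNIV g" "\<And>x. x \<notin> K \<Longrightarrow> g x = 0"
  shows "\<exists>M. \<forall>x. norm (g x) \<le> M"
proof -
  have "compact (g ` K)" using assms by (intro compact_continuous_image) (auto intro: continuous_on_subset)
  then obtain B where "\<forall>y\<in>g ` K. norm y \<le> B" using compact_imp_bounded bounded_pos by blast
  then have "norm (g x) \<le> max B 0" for x using assms(3)[of x] by (cases "x \<in> K") auto
  then show ?thesis by blast
qed

lemma norm_powr_line_deriv: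
  fixes x :: "real^'n::finite"
  assumes y: "x + s *\<^sub>R axis i 1 \<noteq> 0"
  shows "((\<lambda>u. norm (x + u *\<^sub>R axis i 1) powr t) has_real_derivative
           t * ((x + s *\<^sub>R axis i 1) $ i) * norm (x + s *\<^sub>R axis i 1) powr (t - 2)) (at s)"
proof -
  define y where "y = x + s *\<^sub>R axis i 1"
  have L: "((\<lambda>u. x + u *\<^sub>R axis i (1::real)) has_derivative (\<lambda>h. h *\<^sub>R axis i 1)) (at s)"
    by (auto intro!: derivative_eq_intros)
  have N: "(norm has_derivative (\<lambda>h. inner h (sgn y))) (at y)"
    using has_derivative_norm[of y] y by (simp add: y_def)
  have "((\<lambda>u. norm (x + u *\<^sub>R axis i 1)) has_derivative (\<lambda>h. inner (h *\<^sub>R axis i 1) (sgn y))) (at s)"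
    unfolding y_def by (rule has_derivative_compose[OF L N[unfolded y_def]])
  moreover have "(\<lambda>h. inner (h *\<^sub>R axis i 1) (sgn y)) = (*) (y $ i / norm y)"
    by (rule ext) (simp add: inner_axis' sgn_div_norm field_simps)
  ultimately have dn: "((\<lambda>u. norm (x + u *\<^sub>R axis i 1)) has_real_derivative (y $ i / norm y)) (at s)"
    by (simp add: has_field_derivative_def)
  have pos: "0 < norm (x + s *\<^sub>R axis i 1)" using y by simp
  have "((\<lambda>u. norm (x + u *\<^sub>R axis i 1) powr t) has_real_derivative
      t * norm (x + s *\<^sub>R axis i 1) powr (t - real 1) * (y $ i / norm y)) (at s)"
    by (rule DERIV_fun_powr[OF dn pos])
  moreover have "t * norm y powr (t - real 1) * (y $ i / norm y) = t * (y $ i) * norm y powr (t - 2)"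
  proof -
    have "norm y powr (t - 2) = norm y powr ((t - 1) - 1)" by simp
    also have "\<dots> = norm y powr (t - 1) / norm y powr 1" by (rule powr_diff)
    finally have "norm y powr (t - real 1) / norm y = norm y powr (t - 2)"
      by simp
    moreover have "norm y \<noteq> 0" using pos by (simp add: y_def)
    then have "t * norm y powr (t - real 1) * (y $ i / norm y) = t * (y $ i) * (norm y powr (t - real 1) / norm y)"
      by (simp add: field_simps)
    ultimately show ?thesis by simp
  qed
  ultimately show ?thesis by (simp add: y_def)
qed

context
  fixes f :: "real^'n::finite \<Rightarrow> real"
  assumes fC: "C0_inf_punctured f"
begin

definition hi :: "real \<Rightarrow> real \<Rightarrow> 'n \<Rightarrow> real^'n \<Rightarrow> real" where
  "hi p t i y = \<bar>f y\<bar> powr p * (y $ i) * norm y powr t"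

definition hdi :: "real \<Rightarrow> real \<Rightarrow> 'n \<Rightarrow> real^'n \<Rightarrow> real" where
  "hdi p t i y = (p * \<bar>f y\<bar> powr (p-1) * sgn (f y) * partial_deriv i f y) * (y $ i) * norm y powr t
     + \<bar>f y\<bar> powr p * (norm y powr t + (y $ i) * (t * (y $ i) * norm y powr (t - 2)))"

lemma hi_deriv:
  assumes p: "1 < p"
  shows "((\<lambda>u. hi p t i (x + u *\<^sub>R axis i 1)) has_real_derivative hdi p t i (x + s *\<^sub>R axis i 1)) (at s)"
proof -
  obtain r where r: "r > 0" "\<And>x. norm x < r \<Longrightarrow> x \<notin> suppK f" using r_exists[OF fC] by blast
  define y where "y = x + s *\<^sub>R axis i 1"
  show ?thesis
  proof (cases "norm y < r")
    case True
    define S where "S = (\<lambda>u. x + u *\<^sub>R axis i (1::real)) -` {z. norm z < r}"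
    have "open S" unfolding S_def
      by (rule continuous_open_vimage) (auto intro!: continuous_intros open_Collect_less)
    moreover have "s \<in> S" using True by (simp add: S_def y_def)
    moreover have "\<And>u. u \<in> S \<Longrightarrow> 0 = hi p t i (x + u *\<^sub>R axis i 1)"
      using f_out[OF fC] r by (auto simp: S_def hi_def)
    ultimately have "((\<lambda>u. hi p t i (x + u *\<^sub>R axis i 1)) has_real_derivative 0) (at s)"
      by (intro has_field_derivative_transform_within_open[OF DERIV_const]) auto
    moreover have "hdi p t i y = 0" using f_out[OF fC] r True by (simp add: hdi_def)
    ultimately show ?thesis by (simp add: y_def)
  next
    case False
    then have y0: "y \<noteq> 0" using r by auto
    have dF: "((\<lambda>u. \<bar>f (x + u *\<^sub>R axis i 1)\<bar> powr p) has_real_derivative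
        p * \<bar>f y\<bar> powr (p-1) * sgn (f y) * partial_deriv i f y) (at s)"
      using DERIV_chain2[OF abs_powr_deriv[OF p] f_line_deriv[OF fC]] by (simp add: y_def)
    have dA: "((\<lambda>u. (x + u *\<^sub>R axis i 1) $ i) has_real_derivative 1) (at s)"
      by (auto intro!: derivative_eq_intros)
    have dW: "((\<lambda>u. norm (x + u *\<^sub>R axis i 1) powr t) has_real_derivative
           t * (y $ i) * norm y powr (t - 2)) (at s)"
      using norm_powr_line_deriv[of x s i t] y0 by (simp add: y_def)
    have "((\<lambda>u. \<bar>f (x + u *\<^sub>R axis i 1)\<bar> powr p * ((x + u *\<^sub>R axis i 1) $ i) * norm (x + u *\<^sub>R axis i 1) powr t)
       has_real_derivative
       (p * \<bar>f y\<bar> powr (p-1) * sgn (f y) * partial_deriv i f y * (y $ i) + 1 * \<bar>f y\<bar> powr p) * norm y powr t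
        + t * (y $ i) * norm y powr (t - 2) * (\<bar>f y\<bar> powr p * (y $ i))) (at s)"
      using DERIV_mult[OF DERIV_mult[OF dF dA] dW] by (simp add: y_def)
    then show ?thesis unfolding hi_def hdi_def y_def[symmetric]
      by (rule DERIV_cong) (simp add: algebra_simps)
  qed
qed


lemma grad_cont: "continuous_on UNIV (grad f)"
  unfolding grad_def by (intro continuous_on_vec_lambda pd_cont[OF fC])

lemma grad_out: "y \<notin> suppK f \<Longrightarrow> grad f y = 0"
  by (simp add: grad_def vec_eq_iff pd_out[OF fC])

lemma f_meas[measurable]: "f \<in> borel_measurable borel"
  by (rule borel_measurable_continuous_onI[OF f_cont[OF fC]])

lemma pd_meas[measurable]: "partial_deriv i f \<in> borel_measurable borel"
  by (rule borel_measurable_continuous_onI[OF pd_cont[OF fC]])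

lemma grad_meas[measurable]: "grad f \<in> borel_measurable borel"
  by (rule borel_measurable_continuous_onI[OF grad_cont])

lemma f_bound: "\<exists>B>0. \<forall>y. \<bar>f y\<bar> \<le> B \<and> norm (grad f y) \<le> B"
proof -
  obtain B1 where B1: "\<And>y. norm (f y) \<le> B1"
    using bounded_outside[OF K_compact[OF fC] f_cont[OF fC] f_out[OF fC]] by blast
  obtain B2 where B2: "\<And>y. norm (grad f y) \<le> B2"
    using bounded_outside[OF K_compact[OF fC] grad_cont grad_out] by blast
  show ?thesis
    by (rule exI[of _ "max 1 (max B1 B2)"]) (auto simp: le_max_iff_disj B1 B2 order.trans[OF B1[unfolded real_norm_def]])
qed

lemma abs_mult_le: "\<bar>a\<bar> \<le> A \<Longrightarrow> \<bar>b\<bar> \<le> B \<Longrightarrow> \<bar>a * b\<bar> \<le> (A * B :: real)"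
  by (simp add: abs_mult mult_mono')

lemma abs_add_le: "\<bar>a\<bar> \<le> A \<Longrightarrow> \<bar>b\<bar> \<le> B \<Longrightarrow> \<bar>a + b\<bar> \<le> (A + B :: real)"
  by simp

lemma weight_bound:
  assumes "0 < r" "r \<le> norm y" "norm y \<le> R"
  shows "\<bar>norm y powr t\<bar> \<le> r powr t + R powr t"
proof (cases "0 \<le> t")
  case True
  then have "norm y powr t \<le> R powr t" using assms by (intro powr_mono2) auto
  moreover have "\<bar>norm y powr t\<bar> = norm y powr t" by simp
  ultimately show ?thesis using powr_ge_zero[of r t] by linarith
next
  case False
  then have "norm y powr t \<le> r powr t" using assms by (intro powr_mono2') auto
  moreover have "\<bar>norm y powr t\<bar> = norm y powr t" by simp
  ultimately show ?thesis using powr_ge_zero[of R t] by linarith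
qed

lemma int_on_K:
  fixes g :: "real^'n \<Rightarrow> real"
  assumes "g \<in> borel_measurable borel" "\<And>y. y \<notin> suppK f \<Longrightarrow> g y = 0"
    "\<And>y. y \<in> suppK f \<Longrightarrow> \<bar>g y\<bar> \<le> M"
  shows "integrable lborel g"
  by (rule int_bounded_support[OF assms(1) K_compact[OF fC] assms(2,3)])

lemma geom:
  obtains r R B where "0 < r" "0 < R" "0 < B"
    "\<And>y. y \<in> suppK f \<Longrightarrow> r \<le> norm y \<and> norm y \<le> R"
    "\<And>y. \<bar>f y\<bar> \<le> B" "\<And>y. norm (grad f y) \<le> B"
proof -
  obtain r where r: "r > 0" "\<And>x. norm x < r \<Longrightarrow> x \<notin> suppK f" using r_exists[OF fC] by blast
  obtain R where R: "R > 0" "\<And>x. x \<in> suppK f \<Longrightarrow> norm x \<le> R" using R_exists[OF fC] by blast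
  obtain B where B: "B > 0" "\<And>y. \<bar>f y\<bar> \<le> B" "\<And>y. norm (grad f y) \<le> B" using f_bound by blast
  show ?thesis
    by (rule that[OF r(1) R(1) B(1)]) (use r R B in \<open>force+\<close>)
qed

lemma pd_le_grad: "\<bar>partial_deriv i f y\<bar> \<le> norm (grad f y)"
  using component_le_norm_cart[of "grad f y" i] by (simp add: grad_def)

lemma euler:
  assumes p: "2 \<le> p"
  shows "integrable lborel (\<lambda>y. \<bar>f y\<bar> powr p * norm y powr t)"
    and "integrable lborel (\<lambda>y. p * \<bar>f y\<bar> powr (p-1) * sgn (f y) * inner y (grad f y) * norm y powr t)"
    and "(\<integral>y. p * \<bar>f y\<bar> powr (p-1) * sgn (f y) * inner y (grad f y) * norm y powr t \<partial>lborel)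
         = - (real CARD('n) + t) * (\<integral>y. \<bar>f y\<bar> powr p * norm y powr t \<partial>lborel)"
proof -
  obtain r R B where g: "0 < r" "0 < R" "0 < B"
    "\<And>y. y \<in> suppK f \<Longrightarrow> r \<le> norm y \<and> norm y \<le> R"
    "\<And>y. \<bar>f y\<bar> \<le> B" "\<And>y. norm (grad f y) \<le> B"
    using geom by blast
  have fpow: "\<bar>\<bar>f y\<bar> powr q\<bar> \<le> B powr q" if "0 \<le> q" for y q
    using g(5)[of y] that by (simp add: powr_mono2)
  have W: "\<bar>norm y powr s\<bar> \<le> r powr s + R powr s" if "y \<in> suppK f" for y s
    using weight_bound[OF g(1)] g(4)[OF that] by blast
  have ci: "\<bar>y $ i\<bar> \<le> R" if "y \<in> suppK f" for y i
    using component_le_norm_cart[of y i] g(4)[OF that] by linarith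
  have pdb: "\<bar>partial_deriv i f y\<bar> \<le> B" for y i
    using pd_le_grad[of i y] g(6)[of y] by linarith
  have sg: "\<bar>sgn (f y)\<bar> \<le> 1" for y by (simp add: abs_sgn_eq)
  have p1: "1 < p" using p by simp
  have hint: "integrable lborel (hdi p t i)" and hzero: "(\<integral>y. hdi p t i y \<partial>lborel) = 0" for i
  proof -
    have hm: "hi p t i \<in> borel_measurable borel" unfolding hi_def by measurable
    have hint: "integrable lborel (hi p t i)"
    proof (rule int_on_K[OF hm])
      show "hi p t i y = 0" if "y \<notin> suppK f" for y using f_out[OF fC that] p by (simp add: hi_def)
      show "\<bar>hi p t i y\<bar> \<le> B powr p * R * (r powr t + R powr t)" if "y \<in> suppK f" for y
        unfolding hi_def using p by (intro abs_mult_le fpow ci W that) auto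
    qed
    have supp: "hi p t i x = 0" if "R < norm x" for x
    proof -
      have "x \<notin> suppK f" using g(4)[of x] that by force
      then show ?thesis using f_out[OF fC] p by (simp add: hi_def)
    qed
    have bd: "\<bar>hdi p t i y\<bar> \<le> (p * B powr (p-1) * 1 * B) * R * (r powr t + R powr t)
       + B powr p * ((r powr t + R powr t) + R * (\<bar>t\<bar> * R * (r powr (t-2) + R powr (t-2))))" for y
    proof (cases "y \<in> suppK f")
      case True
      show ?thesis unfolding hdi_def using p
        by (intro abs_add_le abs_mult_le fpow ci W True pdb sg) auto
    next
      case False
      have "0 \<le> (p * B powr (p-1) * 1 * B) * R * (r powr t + R powr t)"
        using g p by (intro mult_nonneg_nonneg add_nonneg_nonneg) auto
      moreover have "0 \<le> B powr p * ((r powr t + R powr t) + R * (\<bar>t\<bar> * R * (r powr (t-2) + R powr (t-2))))"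
        using g p by (intro mult_nonneg_nonneg add_nonneg_nonneg) auto
      ultimately show ?thesis using f_out[OF fC False] p by (simp add: hdi_def)
    qed
    show "integrable lborel (hdi p t i)"
      by (rule ibp_zero(1)[OF hm hint supp hi_deriv[OF p1] bd])
    show "(\<integral>y. hdi p t i y \<partial>lborel) = 0"
      by (rule ibp_zero(2)[OF hm hint supp hi_deriv[OF p1] bd])
  qed
  define A where "A y = p * \<bar>f y\<bar> powr (p-1) * sgn (f y) * inner y (grad f y) * norm y powr t" for y
  define Bt where "Bt y = \<bar>f y\<bar> powr p * norm y powr t" for y
  have f0: "f 0 = 0" using f_out[OF fC K_0[OF fC]] .
  have sumeq: "(\<Sum>i\<in>UNIV. hdi p t i y) = A y + (real CARD('n) + t) * Bt y" for y
  proof (cases "f y = 0")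
    case True then show ?thesis using p by (simp add: hdi_def A_def Bt_def)
  next
    case False
    then have y0: "y \<noteq> 0" using f0 by auto
    define a where "a = p * \<bar>f y\<bar> powr (p-1) * sgn (f y) * norm y powr t"
    define F where "F = \<bar>f y\<bar> powr p"
    have e: "hdi p t i y = a * (y $ i * partial_deriv i f y) + F * norm y powr t
        + (F * t * norm y powr (t - 2)) * (y $ i * y $ i)" for i
      by (simp add: hdi_def a_def F_def algebra_simps)
    have s1: "(\<Sum>i\<in>UNIV. y $ i * partial_deriv i f y) = inner y (grad f y)"
      by (simp add: inner_vec_def grad_def)
    have s2: "(\<Sum>i\<in>UNIV. y $ i * y $ i) = (norm y)\<^sup>2"
      by (simp add: power2_norm_eq_inner inner_vec_def)
    have s3: "norm y powr (t - 2) * (norm y)\<^sup>2 = norm y powr t"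
    proof -
      have "norm y powr (t - 2) * norm y powr 2 = norm y powr t"
        using powr_add[of "norm y" "t-2" 2] by simp
      moreover have "norm y powr 2 = (norm y)\<^sup>2" by simp
      ultimately show ?thesis by simp
    qed
    have "(\<Sum>i\<in>UNIV. hdi p t i y) = a * inner y (grad f y) + real CARD('n) * (F * norm y powr t)
        + F * t * (norm y powr (t - 2) * (norm y)\<^sup>2)"
      unfolding e sum.distrib sum_distrib_left[symmetric] s1 s2 by (simp add: algebra_simps)
    also have "\<dots> = A y + (real CARD('n) + t) * Bt y"
      unfolding s3 by (simp add: A_def Bt_def a_def F_def algebra_simps)
    finally show ?thesis .
  qed
  have BtI: "integrable lborel Bt"
  proof (rule int_on_K)
    show "Bt \<in> borel_measurable borel" unfolding Bt_def by measurable
    show "Bt y = 0" if "y \<notin> suppK f" for y using f_out[OF fC that] p by (simp add: Bt_def)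
    show "\<bar>Bt y\<bar> \<le> B powr p * (r powr t + R powr t)" if "y \<in> suppK f" for y
      unfolding Bt_def using p by (intro abs_mult_le fpow W that) auto
  qed
  have SI: "integrable lborel (\<lambda>y. \<Sum>i\<in>UNIV. hdi p t i y)"
    using hint by (intro Bochner_Integration.integrable_sum) auto
  have S0: "(\<integral>y. (\<Sum>i\<in>UNIV. hdi p t i y) \<partial>lborel) = 0"
    using hint hzero by (subst Bochner_Integration.integral_sum) auto
  have Aeq: "A = (\<lambda>y. (\<Sum>i\<in>UNIV. hdi p t i y) - (real CARD('n) + t) * Bt y)"
    by (rule ext) (simp add: sumeq)
  have AI: "integrable lborel A"
    unfolding Aeq using SI BtI by (intro Bochner_Integration.integrable_diff Bochner_Integration.integrable_mult_right) auto
  show "integrable lborel (\<lambda>y. \<bar>f y\<bar> powr p * norm y powr t)" using BtI by (simp add: Bt_def[abs_def])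
  show "integrable lborel (\<lambda>y. p * \<bar>f y\<bar> powr (p-1) * sgn (f y) * inner y (grad f y) * norm y powr t)"
    using AI by (simp add: A_def[abs_def])
  have "(\<integral>y. A y \<partial>lborel) = - (real CARD('n) + t) * (\<integral>y. Bt y \<partial>lborel)"
    unfolding Aeq using SI BtI S0 by (simp add: algebra_simps)
  then show "(\<integral>y. p * \<bar>f y\<bar> powr (p-1) * sgn (f y) * inner y (grad f y) * norm y powr t \<partial>lborel)
         = - (real CARD('n) + t) * (\<integral>y. \<bar>f y\<bar> powr p * norm y powr t \<partial>lborel)"
    by (simp add: A_def Bt_def)
qed

end

lemma young_opt:
  fixes X A Bq p :: real
  assumes p: "1 < p" and X: "0 \<le> X" and A: "0 \<le> A" and Bq: "0 < Bq"
    and H: "\<And>e. 0 < e \<Longrightarrow> X \<le> e powr p / p * A + e powr (-(p/(p-1))) / (p/(p-1)) * Bq"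
  shows "X powr p \<le> A * Bq powr (p-1)"
proof (cases "A = 0")
  case True
  have "X = 0"
  proof (rule ccontr)
    assume "X \<noteq> 0"
    then have X0: "0 < X" using X by simp
    define q where "q = p / (p - 1)"
    have q: "0 < q" using p by (simp add: q_def)
    define e where "e = (2 * Bq / (q * X)) powr (1 / q)"
    have e0: "0 < e" using Bq q X0 by (simp add: e_def)
    have "e powr (-q) = (2 * Bq / (q * X)) powr (- 1)"
      using q by (simp add: e_def powr_powr)
    also have "\<dots> = q * X / (2 * Bq)" using Bq q X0 by (simp add: powr_minus_divide)
    finally have "e powr (-q) / q * Bq = X / 2" using Bq q by (simp add: field_simps)
    moreover have "X \<le> e powr (-q) / q * Bq" using H[OF e0, folded q_def] True by simp
    ultimately have "X \<le> X / 2" by metis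
    then show False using X0 by simp
  qed
  then show ?thesis using p True by simp
next
  case False
  then have A0: "0 < A" using A by simp
  define a where "a = A powr (1/p)"
  define b where "b = Bq powr (1/p)"
  have a0: "0 < a" and b0: "0 < b" using A0 Bq by (auto simp: a_def b_def)
  have Aa: "A = a powr p" and Bb: "Bq = b powr p" using A0 Bq p by (auto simp: a_def b_def powr_powr)
  define e where "e = (b / a) powr ((p - 1) / p)"
  have e0: "0 < e" using a0 b0 by (simp add: e_def)
  have ep: "e powr p = (b / a) powr (p - 1)" using p by (simp add: e_def powr_powr)
  have eq: "e powr (-(p/(p-1))) = (b / a) powr (-1)" using p by (simp add: e_def powr_powr)
  have t1: "e powr p / p * A = a * b powr (p - 1) / p"
  proof -
    have "e powr p * A = b powr (p-1) / a powr (p-1) * a powr p"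
      using a0 b0 by (simp add: ep Aa powr_divide)
    also have "\<dots> = b powr (p-1) * a"
      using a0 by (simp add: powr_diff)
    finally show ?thesis by simp
  qed
  have t2: "e powr (-(p/(p-1))) / (p/(p-1)) * Bq = a * b powr (p - 1) * ((p-1)/p)"
  proof -
    have "e powr (-(p/(p-1))) * Bq = (b / a) powr (-1) * b powr p"
      by (subst Bb) (simp only: eq)
    also have "(b / a) powr (-1) = a / b" using a0 b0 by (simp add: powr_minus_divide)
    finally have "e powr (-(p/(p-1))) * Bq = a / b * b powr p" .
    also have "\<dots> = a * b powr (p-1)"
      using b0 by (simp add: powr_diff)
    finally show ?thesis using p by (simp add: field_simps)
  qed
  have "X \<le> a * b powr (p-1)"
    using H[OF e0] t1 t2 p by (simp add: field_simps)
  then have "X powr p \<le> (a * b powr (p-1)) powr p"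
    using X p by (intro powr_mono2) auto
  also have "\<dots> = A * Bq powr (p-1)"
    using a0 b0 by (simp add: Aa Bb powr_mult powr_powr mult.commute)
  finally show ?thesis .
qed

lemma abs_powr_sgn: "1 \<le> p \<Longrightarrow> \<bar>u\<bar> powr (p-1) * sgn u * u = \<bar>u::real\<bar> powr p"
proof (cases "u = 0")
  case False
  assume p: "1 \<le> p"
  have "sgn u * u = \<bar>u\<bar> powr 1" using False by (simp add: sgn_mult_self_eq abs_if sgn_if)
  then have "\<bar>u\<bar> powr (p-1) * sgn u * u = \<bar>u\<bar> powr (p-1) * \<bar>u\<bar> powr 1" by (simp add: mult.assoc)
  also have "\<dots> = \<bar>u\<bar> powr p" using False powr_add[of "\<bar>u\<bar>" "p-1" 1] by simp
  finally show ?thesis .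
qed simp

lemma amul: "\<bar>a\<bar> \<le> A \<Longrightarrow> \<bar>b\<bar> \<le> B \<Longrightarrow> \<bar>a * b\<bar> \<le> (A * B :: real)"
  by (simp add: abs_mult mult_mono')

lemma powr_bound: "\<bar>u\<bar> \<le> U \<Longrightarrow> 0 \<le> q \<Longrightarrow> \<bar>\<bar>u\<bar> powr q\<bar> \<le> U powr (q::real)"
  by (simp add: powr_mono2)

lemma div_powr: "u / x powr c = u * (x::real) powr (-c)"
  by (simp add: powr_minus divide_inverse)

context
  fixes f :: "real^'n::finite \<Rightarrow> real"
  assumes fC: "C0_inf_punctured f"
begin

lemma main_ineq:
  fixes p \<alpha> b :: real
  assumes p2: "2 \<le> p" and pn: "p < real CARD('n)"
    and al: "\<alpha> < (real CARD('n) - p) / p"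
  shows "(\<integral>x. norm (grad f x) powr p / norm x powr (\<alpha> * p) \<partial>lborel)
             - ((real CARD('n) - p - \<alpha> * p) / p) powr p
               * (\<integral>x. \<bar>f x\<bar> powr p / norm x powr ((\<alpha> + 1) * p) \<partial>lborel)
             \<ge> c_const p * \<bar>(real CARD('n) * (p - 1) - p * b) / p^2\<bar> powr p
                 * (\<integral>x. \<bar>f x\<bar> powr p * norm x powr (real CARD('n) - p - \<alpha> * p - (real CARD('n) + p * b) / p) \<partial>lborel) powr p
                 / (\<integral>x. \<bar>f x\<bar> powr p * norm x powr (real CARD('n) - p - \<alpha> * p - b * p / (p - 1)) \<partial>lborel) powr (p - 1)"
proof -
  define n where "n = real CARD('n)"
  define \<gamma> where "\<gamma> = (n - p - \<alpha> * p) / p"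
  define s where "s = (\<alpha> + 1) * p"
  define \<delta>1 where "\<delta>1 = n - p - \<alpha> * p - (n + p * b) / p"
  define \<delta>2 where "\<delta>2 = n - p - \<alpha> * p - b * p / (p - 1)"
  define c where "c = c_const p"
  define D where "D x = inner x (grad f x)" for x
  have p0: "0 < p" and p1: "1 < p" using p2 by auto
  have \<gamma>0: "0 < \<gamma>"
  proof -
    have "\<alpha> * p < n - p" using al p0 by (simp add: n_def pos_less_divide_eq)
    then show ?thesis using p0 by (simp add: \<gamma>_def)
  qed
  have ns: "n - s = p * \<gamma>" using p0 by (simp add: \<gamma>_def s_def field_simps)
  have c0: "0 \<le> c" using c_const_nonneg[OF p2] by (simp add: c_def)
  obtain r R B where g: "0 < r" "0 < R" "0 < B"
    "\<And>y. y \<in> suppK f \<Longrightarrow> r \<le> norm y \<and> norm y \<le> R"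
    "\<And>y. \<bar>f y\<bar> \<le> B" "\<And>y. norm (grad f y) \<le> B"
    using geom[OF fC] by blast
  have W: "\<bar>norm y powr t\<bar> \<le> r powr t + R powr t" if "y \<in> suppK f" for y t
    using weight_bound[OF fC g(1)] g(4)[OF that] by blast
  have Db: "\<bar>D y\<bar> \<le> R * B" if "y \<in> suppK f" for y
  proof -
    have "\<bar>D y\<bar> \<le> norm y * norm (grad f y)" unfolding D_def by (rule Cauchy_Schwarz_ineq2)
    also have "\<dots> \<le> R * B" using g(2) g(4)[OF that] g(6)[of y] by (intro mult_mono) auto
    finally show ?thesis .
  qed
  have D_out: "D y = 0" if "y \<notin> suppK f" for y using grad_out[OF fC that] by (simp add: D_def)
  have f_out': "f y = 0" if "y \<notin> suppK f" for y using f_out[OF fC that] .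
  note [measurable] = f_meas[OF fC] grad_meas[OF fC]
  have Dm[measurable]: "D \<in> borel_measurable borel" unfolding D_def[abs_def] by measurable

  define L where "L = (\<integral>x. norm (grad f x) powr p * norm x powr (-(\<alpha> * p)) \<partial>lborel)"
  define H where "H = (\<integral>x. \<bar>f x\<bar> powr p * norm x powr (-s) \<partial>lborel)"
  define J where "J = (\<integral>x. \<bar>D x + \<gamma> * f x\<bar> powr p * norm x powr (-s) \<partial>lborel)"
  define I1 where "I1 = (\<integral>x. \<bar>f x\<bar> powr p * norm x powr \<delta>1 \<partial>lborel)"
  define I2 where "I2 = (\<integral>x. \<bar>f x\<bar> powr p * norm x powr \<delta>2 \<partial>lborel)"
  define Ae where "Ae t x = p * \<bar>f x\<bar> powr (p-1) * sgn (f x) * D x * norm x powr t" for t x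

  have IL: "integrable lborel (\<lambda>x. norm (grad f x) powr p * norm x powr (-(\<alpha> * p)))"
  proof (rule int_on_K[OF fC])
    show "(\<lambda>x. norm (grad f x) powr p * norm x powr (-(\<alpha> * p))) \<in> borel_measurable borel" by measurable
    show "norm (grad f y) powr p * norm y powr (-(\<alpha> * p)) = 0" if "y \<notin> suppK f" for y
      using grad_out[OF fC that] p0 by simp
    show "\<bar>norm (grad f y) powr p * norm y powr (-(\<alpha> * p))\<bar> \<le> B powr p * (r powr (-(\<alpha> * p)) + R powr (-(\<alpha> * p)))"
      if "y \<in> suppK f" for y
      using g(6)[of y] p0 by (intro amul W that) (auto intro!: powr_mono2)
  qed
  have IJ: "integrable lborel (\<lambda>x. \<bar>D x + \<gamma> * f x\<bar> powr p * norm x powr (-s))"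
  proof (rule int_on_K[OF fC])
    show "(\<lambda>x. \<bar>D x + \<gamma> * f x\<bar> powr p * norm x powr (-s)) \<in> borel_measurable borel" by measurable
    show "\<bar>D y + \<gamma> * f y\<bar> powr p * norm y powr (-s) = 0" if "y \<notin> suppK f" for y
      using D_out[OF that] f_out'[OF that] by simp
    show "\<bar>\<bar>D y + \<gamma> * f y\<bar> powr p * norm y powr (-s)\<bar> \<le> (R * B + \<gamma> * B) powr p * (r powr (-s) + R powr (-s))"
      if "y \<in> suppK f" for y
    proof (intro amul W that powr_bound)
      have "\<bar>\<gamma> * f y\<bar> \<le> \<gamma> * B" using g(5)[of y] \<gamma>0 by (simp add: abs_mult)
      then show "\<bar>D y + \<gamma> * f y\<bar> \<le> R * B + \<gamma> * B" using Db[OF that] by linarith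
    qed (use p0 in auto)
  qed
  have IH: "integrable lborel (\<lambda>x. \<bar>f x\<bar> powr p * norm x powr (-s))"
    using euler(1)[OF fC p2] .
  have IA: "integrable lborel (Ae t)" for t
    using euler(2)[OF fC p2, of t] by (simp add: Ae_def[abs_def] D_def)
  have EA: "(\<integral>x. Ae t x \<partial>lborel) = - (n + t) * (\<integral>x. \<bar>f x\<bar> powr p * norm x powr t \<partial>lborel)" for t
    using euler(3)[OF fC p2, of t] by (simp add: Ae_def[abs_def] D_def n_def)
  have I1I: "integrable lborel (\<lambda>x. \<bar>f x\<bar> powr p * norm x powr \<delta>1)" using euler(1)[OF fC p2] .
  have I2I: "integrable lborel (\<lambda>x. \<bar>f x\<bar> powr p * norm x powr \<delta>2)" using euler(1)[OF fC p2] .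

  have pw1: "\<gamma> powr p * (\<bar>f x\<bar> powr p * norm x powr (-s)) - \<gamma> powr (p-1) * Ae (-s) x
      - p * \<gamma> powr p * (\<bar>f x\<bar> powr p * norm x powr (-s)) + c * (\<bar>D x + \<gamma> * f x\<bar> powr p * norm x powr (-s))
      \<le> norm (grad f x) powr p * norm x powr (-(\<alpha> * p))" for x
  proof (cases "x = 0")
    case True then show ?thesis by (simp add: Ae_def)
  next
    case False
    define N where "N = norm x"
    have N0: "0 < N" using False by (simp add: N_def)
    have sc: "\<bar>- \<gamma> * f x\<bar> powr p + p * (\<bar>- \<gamma> * f x\<bar> powr (p-1) * sgn (- \<gamma> * f x)) * (D x - (- \<gamma> * f x))
        + c * \<bar>D x - (- \<gamma> * f x)\<bar> powr p \<le> \<bar>D x\<bar> powr p"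
      unfolding c_def by (rule scalar_ineq[OF p2])
    have e1: "\<bar>- \<gamma> * f x\<bar> powr p = \<gamma> powr p * \<bar>f x\<bar> powr p"
      using \<gamma>0 by (simp add: abs_mult powr_mult)
    have e2: "p * (\<bar>- \<gamma> * f x\<bar> powr (p-1) * sgn (- \<gamma> * f x)) * (D x - (- \<gamma> * f x))
        = - (\<gamma> powr (p-1) * (p * \<bar>f x\<bar> powr (p-1) * sgn (f x) * D x))
          - p * (\<gamma> powr (p-1) * \<gamma>) * (\<bar>f x\<bar> powr (p-1) * sgn (f x) * f x)"
      using \<gamma>0 by (simp add: abs_mult powr_mult sgn_mult algebra_simps)
    have e3: "\<gamma> powr (p-1) * \<gamma> = \<gamma> powr p"
      using \<gamma>0 powr_add[of \<gamma> "p-1" 1] by simp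
    have Rhs0: "\<gamma> powr p * \<bar>f x\<bar> powr p - \<gamma> powr (p-1) * (p * \<bar>f x\<bar> powr (p-1) * sgn (f x) * D x)
        - p * \<gamma> powr p * \<bar>f x\<bar> powr p + c * \<bar>D x + \<gamma> * f x\<bar> powr p \<le> \<bar>D x\<bar> powr p"
      using sc unfolding e1 e2 e3 abs_powr_sgn[OF less_imp_le[OF p1]] by simp
    have cs: "\<bar>D x\<bar> \<le> N * norm (grad f x)" unfolding D_def N_def by (rule Cauchy_Schwarz_ineq2)
    have "\<bar>D x\<bar> powr p \<le> (N * norm (grad f x)) powr p" using cs p0 by (intro powr_mono2) auto
    also have "\<dots> = N powr p * norm (grad f x) powr p" using N0 by (simp add: powr_mult)
    finally have Dle: "\<bar>D x\<bar> powr p \<le> N powr p * norm (grad f x) powr p" .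
    have "\<bar>D x\<bar> powr p * N powr (-s) \<le> N powr p * norm (grad f x) powr p * N powr (-s)"
      using Dle by (intro mult_right_mono) auto
    also have "\<dots> = norm (grad f x) powr p * N powr (-(\<alpha> * p))"
    proof -
      have "N powr p * N powr (-s) = N powr (-(\<alpha> * p))"
        using N0 by (simp add: powr_add[symmetric] s_def algebra_simps)
      then show ?thesis by (simp add: algebra_simps)
    qed
    finally have A: "\<bar>D x\<bar> powr p * N powr (-s) \<le> norm (grad f x) powr p * N powr (-(\<alpha> * p))" .
    have B: "(\<gamma> powr p * \<bar>f x\<bar> powr p - \<gamma> powr (p-1) * (p * \<bar>f x\<bar> powr (p-1) * sgn (f x) * D x)
        - p * \<gamma> powr p * \<bar>f x\<bar> powr p + c * \<bar>D x + \<gamma> * f x\<bar> powr p) * N powr (-s)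
        \<le> \<bar>D x\<bar> powr p * N powr (-s)"
      using Rhs0 by (intro mult_right_mono) auto
    show ?thesis using order.trans[OF B A] unfolding N_def Ae_def by (simp add: algebra_simps)
  qed
  have step1: "\<gamma> powr p * H + c * J \<le> L"
  proof -
    have "(\<integral>x. \<gamma> powr p * (\<bar>f x\<bar> powr p * norm x powr (-s)) - \<gamma> powr (p-1) * Ae (-s) x
      - p * \<gamma> powr p * (\<bar>f x\<bar> powr p * norm x powr (-s)) + c * (\<bar>D x + \<gamma> * f x\<bar> powr p * norm x powr (-s)) \<partial>lborel)
      \<le> L"
      unfolding L_def using IH IA IJ IL pw1 by (intro integral_mono) auto
    moreover have "(\<integral>x. \<gamma> powr p * (\<bar>f x\<bar> powr p * norm x powr (-s)) - \<gamma> powr (p-1) * Ae (-s) x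
      - p * \<gamma> powr p * (\<bar>f x\<bar> powr p * norm x powr (-s)) + c * (\<bar>D x + \<gamma> * f x\<bar> powr p * norm x powr (-s)) \<partial>lborel)
      = \<gamma> powr p * H - \<gamma> powr (p-1) * (\<integral>x. Ae (-s) x \<partial>lborel) - p * \<gamma> powr p * H + c * J"
      unfolding H_def J_def using IH IA IJ by simp
    moreover have "\<gamma> powr (p-1) * (\<integral>x. Ae (-s) x \<partial>lborel) = - p * \<gamma> powr p * H"
    proof -
      have "\<gamma> powr (p-1) * (\<integral>x. Ae (-s) x \<partial>lborel) = - (\<gamma> powr (p-1) * \<gamma>) * p * H"
        using EA[of "-s"] ns by (simp add: H_def algebra_simps)
      also have "\<gamma> powr (p-1) * \<gamma> = \<gamma> powr p" using \<gamma>0 powr_add[of \<gamma> "p-1" 1] by simp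
      finally show ?thesis by simp
    qed
    ultimately show ?thesis by simp
  qed
  define V where "V x = (D x + \<gamma> * f x) * (\<bar>f x\<bar> powr (p-1) * sgn (f x)) * norm x powr \<delta>1" for x
  have Veq: "V x = (1/p) * Ae \<delta>1 x + \<gamma> * (\<bar>f x\<bar> powr p * norm x powr \<delta>1)" for x
  proof -
    have a: "\<bar>f x\<bar> powr (p-1) * sgn (f x) * f x = \<bar>f x\<bar> powr p"
      by (rule abs_powr_sgn) (use p1 in simp)
    have "V x = D x * (\<bar>f x\<bar> powr (p-1) * sgn (f x)) * norm x powr \<delta>1
        + \<gamma> * (\<bar>f x\<bar> powr (p-1) * sgn (f x) * f x) * norm x powr \<delta>1"
      by (simp add: V_def algebra_simps)
    also have "\<dots> = (1/p) * Ae \<delta>1 x + \<gamma> * (\<bar>f x\<bar> powr p * norm x powr \<delta>1)"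
      unfolding a using p0 by (simp add: Ae_def)
    finally show ?thesis .
  qed
  have VI: "integrable lborel V"
    unfolding Veq[abs_def] using IA I1I by simp
  define \<kappa> where "\<kappa> = \<gamma> - (n + \<delta>1) / p"
  have intV: "(\<integral>x. V x \<partial>lborel) = \<kappa> * I1"
  proof -
    have "(\<integral>x. V x \<partial>lborel) = (1/p) * (\<integral>x. Ae \<delta>1 x \<partial>lborel) + \<gamma> * I1"
      unfolding Veq I1_def using IA I1I by simp
    also have "\<dots> = \<kappa> * I1" unfolding EA I1_def \<kappa>_def using p0 by (simp add: field_simps)
    finally show ?thesis .
  qed
  have \<kappa>eq: "\<bar>\<kappa>\<bar> = \<bar>(n * (p - 1) - p * b) / p^2\<bar>"
  proof -
    have "\<kappa> = - ((n * (p - 1) - p * b) / p^2)"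
      unfolding \<kappa>_def \<gamma>_def \<delta>1_def using p0 by (simp add: field_simps power2_eq_square)
    then show ?thesis by simp
  qed

  define q where "q = p / (p - 1)"
  have q1: "1 < q" using p1 by (simp add: q_def)
  have pq: "1/p + 1/q = 1" using p1 by (simp add: q_def field_simps)
  have pq2: "(p - 1) * q = p" using p1 by (simp add: q_def)
  have d2: "(\<delta>1 + s / p) * q = \<delta>2"
    using p1 unfolding \<delta>1_def \<delta>2_def s_def q_def by (simp add: field_simps)
  have step3: "\<bar>\<integral>x. V x \<partial>lborel\<bar> \<le> e powr p / p * J + e powr (-(p/(p-1))) / (p/(p-1)) * I2" if e0: "0 < e" for e
  proof -
    have pv: "\<bar>V x\<bar> \<le> e powr p / p * (\<bar>D x + \<gamma> * f x\<bar> powr p * norm x powr (-s))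
        + e powr (-q) / q * (\<bar>f x\<bar> powr p * norm x powr \<delta>2)" for x
    proof (cases "f x = 0")
      case True
      have "0 \<le> e powr p / p * (\<bar>D x + \<gamma> * f x\<bar> powr p * norm x powr (-s))" using p0 by simp
      moreover have "0 \<le> e powr (-q) / q * (\<bar>f x\<bar> powr p * norm x powr \<delta>2)" using q1 by simp
      ultimately show ?thesis using True by (simp add: V_def)
    next
      case False
      have "x \<noteq> 0" using False f_out'[OF K_0[OF fC]] by auto
      define N where "N = norm x"
      have N0: "0 < N" using \<open>x \<noteq> 0\<close> by (simp add: N_def)
      define U where "U = \<bar>D x + \<gamma> * f x\<bar> * N powr (-s/p)"
      define Vv where "Vv = \<bar>f x\<bar> powr (p-1) * N powr (\<delta>1 + s/p)"
      have U0: "0 \<le> U" and V0: "0 \<le> Vv" by (auto simp: U_def Vv_def)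
      have absV: "\<bar>V x\<bar> = U * Vv"
      proof -
        have "N powr (-s/p) * N powr (\<delta>1 + s/p) = N powr \<delta>1"
          by (simp add: powr_add[symmetric])
        moreover have "\<bar>sgn (f x)\<bar> = 1" using False by (simp add: abs_sgn_eq)
        moreover have "\<bar>V x\<bar> = \<bar>D x + \<gamma> * f x\<bar> * (\<bar>f x\<bar> powr (p-1) * \<bar>sgn (f x)\<bar>) * N powr \<delta>1"
          by (simp add: V_def abs_mult N_def)
        ultimately show ?thesis
          by (simp add: U_def Vv_def mult.assoc mult.left_commute)
      qed
      have Y: "(e * U) * (Vv / e) \<le> (e * U) powr p / p + (Vv / e) powr q / q"
        by (rule Youngs_inequality[OF p1 q1 pq]) (use U0 V0 e0 in auto)
      have Y1: "(e * U) * (Vv / e) = U * Vv" using e0 by simp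
      have Y2: "(e * U) powr p = e powr p * (\<bar>D x + \<gamma> * f x\<bar> powr p * N powr (-s))"
      proof -
        have "(N powr (-s/p)) powr p = N powr (-s)" using p0 by (simp add: powr_powr)
        then show ?thesis using e0 U0 by (simp add: U_def powr_mult)
      qed
      have Y3: "(Vv / e) powr q = e powr (-q) * (\<bar>f x\<bar> powr p * N powr \<delta>2)"
      proof -
        have "(\<bar>f x\<bar> powr (p-1)) powr q = \<bar>f x\<bar> powr p" by (simp add: powr_powr pq2)
        moreover have "(N powr (\<delta>1 + s/p)) powr q = N powr \<delta>2" by (simp add: powr_powr d2)
        ultimately have "Vv powr q = \<bar>f x\<bar> powr p * N powr \<delta>2" by (simp add: Vv_def powr_mult)
        then show ?thesis using e0 V0 by (simp add: powr_divide powr_minus_divide)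
      qed
      show ?thesis using Y unfolding Y1 Y2 Y3 absV N_def by (simp add: algebra_simps)
    qed
    have "\<bar>\<integral>x. V x \<partial>lborel\<bar> \<le> (\<integral>x. e powr p / p * (\<bar>D x + \<gamma> * f x\<bar> powr p * norm x powr (-s))
        + e powr (-q) / q * (\<bar>f x\<bar> powr p * norm x powr \<delta>2) \<partial>lborel)"
      using VI IJ I2I pv by (intro integral_abs_bound_integral) auto
    also have "\<dots> = e powr p / p * J + e powr (-q) / q * I2"
      unfolding J_def I2_def using IJ I2I by simp
    finally show ?thesis by (simp add: q_def)
  qed

  have I1pos: "0 \<le> I1" unfolding I1_def by simp
  have I2pos: "0 \<le> I2" unfolding I2_def by simp
  have J0: "0 \<le> J" unfolding J_def by simp
  define X where "X = \<bar>\<kappa>\<bar> * I1"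
  have X0: "0 \<le> X" using I1pos by (simp add: X_def)
  have XV: "X = \<bar>\<integral>x. V x \<partial>lborel\<bar>" using I1pos by (simp add: X_def intV abs_mult)
  have fin: "c * \<bar>\<kappa>\<bar> powr p * I1 powr p / I2 powr (p - 1) \<le> c * J"
  proof (cases "I2 = 0")
    case True then show ?thesis using c0 J0 p1 by simp
  next
    case False
    then have I2p: "0 < I2" using I2pos by simp
    have "X powr p \<le> J * I2 powr (p - 1)"
      by (rule young_opt[OF p1 X0 J0 I2p]) (use step3 XV in simp)
    moreover have "X powr p = \<bar>\<kappa>\<bar> powr p * I1 powr p" using I1pos by (simp add: X_def powr_mult)
    ultimately have "\<bar>\<kappa>\<bar> powr p * I1 powr p / I2 powr (p - 1) \<le> J"
      using I2p by (simp add: divide_le_eq)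
    then show ?thesis using c0 by (simp add: mult_left_mono mult.assoc times_divide_eq_right[symmetric] del: times_divide_eq_right)
  qed
  have final: "c_const p * \<bar>(n * (p - 1) - p * b) / p^2\<bar> powr p * I1 powr p / I2 powr (p - 1)
      \<le> L - \<gamma> powr p * H"
    using fin step1 \<kappa>eq by (simp add: c_def)
  show ?thesis
    using final unfolding L_def H_def I1_def I2_def \<gamma>_def n_def s_def \<delta>1_def \<delta>2_def
    by (simp add: div_powr)
qed

end

theorem mainTheorem4:
  fixes f :: "real^'n \<Rightarrow> real" and p \<alpha> b :: real
  assumes "CARD('n) \<ge> 3"
    and "2 \<le> p" and "p < real CARD('n)"
    and "\<alpha> < (real CARD('n) - p) / p"
    and "C0_inf_punctured f"
  shows "(let n = real CARD('n);
              \<delta>\<^sub>1 = n - p - \<alpha> * p - (n + p * b) / p;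
              \<delta>\<^sub>2 = n - p - \<alpha> * p - b * p / (p - 1);
              C = c_const p * \<bar>(n * (p - 1) - p * b) / p^2\<bar> powr p
          in (\<integral>x. norm (grad f x) powr p / norm x powr (\<alpha> * p) \<partial>lborel)
             - ((n - p - \<alpha> * p) / p) powr p
               * (\<integral>x. \<bar>f x\<bar> powr p / norm x powr ((\<alpha> + 1) * p) \<partial>lborel)
             \<ge> C * (\<integral>x. \<bar>f x\<bar> powr p * norm x powr \<delta>\<^sub>1 \<partial>lborel) powr p
                 / (\<integral>x. \<bar>f x\<bar> powr p * norm x powr \<delta>\<^sub>2 \<partial>lborel) powr (p - 1))"
    using main_ineq[OF assms(5) assms(2) assms(3) assms(4)] by (simp add: Let_def)

end
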